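(* Let $G$ be a finite group and let $p,q$ be distinct primes that are non-adjacent in the codegree graph $\Gamma(G)$. Then it cannot happen that $G$ has a Hall $\{p,q\}$-subgroup $H_1$ which is either a Frobenius group whose kernel is its Sylow $q$-subgroup and whose complement is its Sylow $p$-subgroup, or a 2-Frobenius group of type $(p,q,p)$, and also a Hall $\{p,q\}$-subgroup $H_2$ which is either a Frobenius group whose kernel is its Sylow $p$-subgroup and whose complement is its Sylow $q$-subgroup, or a 2-Frobenius group of type $(q,p,q)$. Consequently, orienting the edge $pq$ of $\overline{\Gamma}(G)$ as $p\to q$ when some Hall $\{p,q\}$-subgroup is of the first kind gives an orientation independent of the choice of Hall $\{p,q\}$-subgroup.
   Context: For $\chi\in{\rm Irr}(G)$, ${\rm cod}(\chi)=|G:\ker\chi|/\chi(1)$; the codegree graph $\Gamma(G)$ has vertices the prime divisors of $|G|$, with distinct $p,q$ adjacent iff $pq$ divides some ${\rm cod}(\chi)$, and $\overline{\Gamma}(G)$ is its complement. It is known that if $p,q$ are non-adjacent in $\Gamma(G)$ then $G$ has a Hall $\{p,q\}$-subgroup and each such is a Frobenius group or a 2-Frobenius group. A Frobenius group is $N\rtimes K$ with $C_N(k)=1$ for all $1\ne k\in K$ (kernel $N$, complement $K$). A group $H$ is a 2-Frobenius group of type $(p,q,r)$ if it has normal subgroups $N\le M$ such that $M$ is a Frobenius group with kernel $N$, $H/N$ is a Frobenius group with kernel $M/N$, $N$ is a $p$-group, $M/N$ is a $q$-group and $H/M$ is an $r$-group. *)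

theory Defs
  imports "HOL-Algebra.Coset" "HOL-Algebra.Sylow" "Jordan_Normal_Form.Matrix"
    "HOL-Computational_Algebra.Primes"
begin

definition is_rep :: "('a, 'b) monoid_scheme \<Rightarrow> nat \<Rightarrow> ('a \<Rightarrow> complex mat) \<Rightarrow> bool" where
  "is_rep G n \<rho> \<longleftrightarrow> n \<ge> 1 \<and>
     (\<forall>g \<in> carrier G. \<rho> g \<in> carrier_mat n n) \<and>
     \<rho> \<one>\<^bsub>G\<^esub> = 1\<^sub>m n \<and>
     (\<forall>g \<in> carrier G. \<forall>h \<in> carrier G. \<rho> (g \<otimes>\<^bsub>G\<^esub> h) = \<rho> g * \<rho> h)"

definition subspace_cn :: "nat \<Rightarrow> complex vec set \<Rightarrow> bool" where
  "subspace_cn n W \<longleftrightarrow> W \<subseteq> carrier_vec n \<and> 0\<^sub>v n \<in> W \<and>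
     (\<forall>v \<in> W. \<forall>w \<in> W. v + w \<in> W) \<and> (\<forall>c. \<forall>v \<in> W. c \<cdot>\<^sub>v v \<in> W)"

definition irreducible_rep :: "('a, 'b) monoid_scheme \<Rightarrow> nat \<Rightarrow> ('a \<Rightarrow> complex mat) \<Rightarrow> bool" where
  "irreducible_rep G n \<rho> \<longleftrightarrow> is_rep G n \<rho> \<and>
     (\<forall>W. subspace_cn n W \<and> (\<forall>g \<in> carrier G. \<forall>v \<in> W. \<rho> g *\<^sub>v v \<in> W)
          \<longrightarrow> W = {0\<^sub>v n} \<or> W = carrier_vec n)"

definition mat_trace :: "complex mat \<Rightarrow> complex" where
  "mat_trace A = (\<Sum>i<dim_row A. A $$ (i, i))"

definition Irr :: "('a, 'b) monoid_scheme \<Rightarrow> ('a \<Rightarrow> complex) set" where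
  "Irr G = {\<chi>. \<exists>n \<rho>. irreducible_rep G n \<rho> \<and>
                 \<chi> = (\<lambda>g. if g \<in> carrier G then mat_trace (\<rho> g) else 0)}"

definition char_ker :: "('a, 'b) monoid_scheme \<Rightarrow> ('a \<Rightarrow> complex) \<Rightarrow> 'a set" where
  "char_ker G \<chi> = {g \<in> carrier G. \<chi> g = \<chi> \<one>\<^bsub>G\<^esub>}"

definition cod :: "('a, 'b) monoid_scheme \<Rightarrow> ('a \<Rightarrow> complex) \<Rightarrow> complex" where
  "cod G \<chi> = of_nat (card (carrier G) div card (char_ker G \<chi>)) / \<chi> \<one>\<^bsub>G\<^esub>"

definition codegree_adjacent :: "('a, 'b) monoid_scheme \<Rightarrow> nat \<Rightarrow> nat \<Rightarrow> bool" where
  "codegree_adjacent G p q \<longleftrightarrow>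
     (\<exists>\<chi> \<in> Irr G. \<exists>k::nat. cod G \<chi> = of_nat (p * q * k))"

definition hall_subgroup :: "('a, 'b) monoid_scheme \<Rightarrow> nat set \<Rightarrow> 'a set \<Rightarrow> bool" where
  "hall_subgroup G \<pi> H \<longleftrightarrow> subgroup H G \<and>
     (\<forall>r. prime r \<and> r dvd card H \<longrightarrow> r \<in> \<pi>) \<and>
     (\<forall>r \<in> \<pi>. \<not> r dvd (card (carrier G) div card H))"

definition sylow_subgroup :: "('a, 'b) monoid_scheme \<Rightarrow> nat \<Rightarrow> 'a set \<Rightarrow> bool" where
  "sylow_subgroup G p P \<longleftrightarrow> subgroup P G \<and>
     card P = p ^ multiplicity p (card (carrier G))"

definition frobenius_group :: "('a, 'b) monoid_scheme \<Rightarrow> 'a set \<Rightarrow> 'a set \<Rightarrow> bool" where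
  "frobenius_group H N K \<longleftrightarrow> group H \<and> N \<lhd> H \<and> subgroup K H \<and>
     N \<noteq> {\<one>\<^bsub>H\<^esub>} \<and> K \<noteq> {\<one>\<^bsub>H\<^esub>} \<and>
     N \<inter> K = {\<one>\<^bsub>H\<^esub>} \<and> N <#>\<^bsub>H\<^esub> K = carrier H \<and>
     (\<forall>k \<in> K - {\<one>\<^bsub>H\<^esub>}. \<forall>n \<in> N. n \<otimes>\<^bsub>H\<^esub> k = k \<otimes>\<^bsub>H\<^esub> n \<longrightarrow> n = \<one>\<^bsub>H\<^esub>)"

definition frobenius_with_kernel :: "('a, 'b) monoid_scheme \<Rightarrow> 'a set \<Rightarrow> bool" where
  "frobenius_with_kernel H N \<longleftrightarrow> (\<exists>K. frobenius_group H N K)"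

definition is_p_power :: "nat \<Rightarrow> nat \<Rightarrow> bool" where
  "is_p_power p m \<longleftrightarrow> (\<exists>k. m = p ^ k)"

definition two_frobenius :: "('a, 'b) monoid_scheme \<Rightarrow> nat \<Rightarrow> nat \<Rightarrow> nat \<Rightarrow> bool" where
  "two_frobenius H p q r \<longleftrightarrow> group H \<and> (\<exists>N M. N \<lhd> H \<and> M \<lhd> H \<and> N \<subseteq> M \<and>
     frobenius_with_kernel (H\<lparr>carrier := M\<rparr>) N \<and>
     frobenius_with_kernel (H Mod N) (rcosets\<^bsub>H\<lparr>carrier := M\<rparr>\<^esub> N) \<and>
     is_p_power p (card N) \<and>
     is_p_power q (card (rcosets\<^bsub>H\<lparr>carrier := M\<rparr>\<^esub> N)) \<and>
     is_p_power r (card (rcosets\<^bsub>H\<^esub> M)))"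

definition frob_kernel_sylow :: "('a, 'b) monoid_scheme \<Rightarrow> 'a set \<Rightarrow> nat \<Rightarrow> nat \<Rightarrow> bool" where
  "frob_kernel_sylow G H p q \<longleftrightarrow> (\<exists>N K. frobenius_group (G\<lparr>carrier := H\<rparr>) N K \<and>
     sylow_subgroup (G\<lparr>carrier := H\<rparr>) q N \<and> sylow_subgroup (G\<lparr>carrier := H\<rparr>) p K)"

end

theory Submission
  imports Defs
begin


lemma card_set_mult_inter1:
  fixes H (structure)
  assumes "group H" "subgroup N H" "subgroup K H" "N \<inter> K = {\<one>\<^bsub>H\<^esub>}"
  shows "card (N <#>\<^bsub>H\<^esub> K) = card N * card K"
proof -
  interpret group H by fact
  have NK: "N \<subseteq> carrier H" "K \<subseteq> carrier H" using assms subgroup.subset by auto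
  have eq: "N <#> K = (\<lambda>(n,k). n \<otimes> k) ` (N \<times> K)"
    unfolding set_mult_def by auto
  have inj: "inj_on (\<lambda>(n,k). n \<otimes> k) (N \<times> K)"
  proof (rule inj_onI, clarify)
    fix n1 k1 n2 k2 assume h: "n1 \<in> N" "k1 \<in> K" "n2 \<in> N" "k2 \<in> K" "n1 \<otimes> k1 = n2 \<otimes> k2"
    have c: "n1 \<in> carrier H" "n2 \<in> carrier H" "k1 \<in> carrier H" "k2 \<in> carrier H" using h NK by auto
    have "inv n2 \<otimes> n1 = k2 \<otimes> inv k1"
      using h(5) c by (metis inv_solve_left inv_solve_right m_assoc m_closed inv_closed)
    moreover have "inv n2 \<otimes> n1 \<in> N" using h assms(2) by (simp add: subgroup.m_closed subgroup.m_inv_closed)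
    moreover have "k2 \<otimes> inv k1 \<in> K" using h assms(3) by (simp add: subgroup.m_closed subgroup.m_inv_closed)
    ultimately have "inv n2 \<otimes> n1 = \<one>" "k2 \<otimes> inv k1 = \<one>" using assms(4) by auto
    then show "n1 = n2 \<and> k1 = k2" using c
      by (metis inv_equality inv_inv l_inv_ex r_inv_ex inv_closed)
  qed
  show ?thesis unfolding eq using card_image[OF inj] card_cartesian_product by simp
qed

lemma frob_card:
  fixes H (structure)
  assumes F: "frobenius_group H N K" and fin: "finite (carrier H)"
  shows "card N * card K = order H" "card K dvd card N - 1" "card K \<ge> 2" "card N \<ge> 2"
proof -
  interpret group H using F unfolding frobenius_group_def by blast
  have cA: "\<And>x y. x \<in> carrier H \<Longrightarrow> y \<in> carrier H \<Longrightarrow> inv x \<otimes> (x \<otimes> y) = y"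
    by (simp add: m_assoc[symmetric])
  have cB: "\<And>x y. x \<in> carrier H \<Longrightarrow> y \<in> carrier H \<Longrightarrow> x \<otimes> (inv x \<otimes> y) = y"
    by (simp add: m_assoc[symmetric])
  have nN: "N \<lhd> H" and sK: "subgroup K H" and N1: "N \<noteq> {\<one>}" and K1: "K \<noteq> {\<one>}"
    and NK: "N \<inter> K = {\<one>}" and prod: "N <#> K = carrier H"
    and fp: "\<And>k n. k \<in> K - {\<one>} \<Longrightarrow> n \<in> N \<Longrightarrow> n \<otimes> k = k \<otimes> n \<Longrightarrow> n = \<one>"
    using F unfolding frobenius_group_def by blast+
  have sN: "subgroup N H" using nN normal_imp_subgroup by blast
  have Nc: "N \<subseteq> carrier H" and Kc: "K \<subseteq> carrier H" using sN sK subgroup.subset by auto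
  have finN: "finite N" and finK: "finite K" using Nc Kc fin finite_subset by auto
  show "card N * card K = order H"
    using card_set_mult_inter1[OF is_group sN sK NK] prod by (simp add: order_def)
  have one_N: "\<one> \<in> N" and one_K: "\<one> \<in> K" using sN sK subgroup.one_closed by auto
  show "card K \<ge> 2"
  proof -
    obtain k where "k \<in> K" "k \<noteq> \<one>" using K1 one_K by blast
    then have "{\<one>, k} \<subseteq> K" using one_K by auto
    from card_mono[OF finK this] show ?thesis using \<open>k \<noteq> \<one>\<close> by simp
  qed
  show "card N \<ge> 2"
  proof -
    obtain k where "k \<in> N" "k \<noteq> \<one>" using N1 one_N by blast
    then have "{\<one>, k} \<subseteq> N" using one_N by auto
    from card_mono[OF finN this] show ?thesis using \<open>k \<noteq> \<one>\<close> by simp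
  qed
  define A where "A = N - {\<one>}"
  define orb where "orb n = (\<lambda>k. k \<otimes> n \<otimes> inv k) ` K" for n
  have conjN: "k \<otimes> n \<otimes> inv k \<in> N" if "k \<in> K" "n \<in> N" for k n
    using nN that Kc by (meson normal.inv_op_closed2 subsetD)
  have orbA: "orb n \<subseteq> A" if "n \<in> A" for n
  proof
    fix x assume "x \<in> orb n"
    then obtain k where k: "k \<in> K" "x = k \<otimes> n \<otimes> inv k" unfolding orb_def by auto
    have kc: "k \<in> carrier H" and nc: "n \<in> carrier H" using k Kc that Nc A_def by auto
    have "x \<noteq> \<one>"
    proof
      assume "x = \<one>"
      have "k \<otimes> n = (k \<otimes> n \<otimes> inv k) \<otimes> k" using kc nc by (simp add: m_assoc cA cB)
      then have "k \<otimes> n = k \<otimes> \<one>" using \<open>x = \<one>\<close> k(2) kc by simp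
      then have "n = \<one>" using kc nc by simp
      then show False using that A_def by auto
    qed
    then show "x \<in> A" using conjN k that A_def by auto
  qed
  have self: "n \<in> orb n" if "n \<in> A" for n
  proof -
    have "n \<in> carrier H" using that A_def Nc by auto
    then have eq: "\<one> \<otimes> n \<otimes> inv \<one> = n" by simp
    show ?thesis unfolding orb_def by (rule image_eqI[where f="\<lambda>k. k \<otimes> n \<otimes> inv k", OF eq[symmetric] one_K])
  qed
  have card_orb: "card (orb n) = card K" if "n \<in> A" for n
  proof -
    have nc: "n \<in> carrier H" using that A_def Nc by auto
    have "inj_on (\<lambda>k. k \<otimes> n \<otimes> inv k) K"
    proof (rule inj_onI)
      fix k1 k2 assume h: "k1 \<in> K" "k2 \<in> K" "k1 \<otimes> n \<otimes> inv k1 = k2 \<otimes> n \<otimes> inv k2"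
      have c: "k1 \<in> carrier H" "k2 \<in> carrier H" using h Kc by auto
      define k where "k = inv k2 \<otimes> k1"
      have kK: "k \<in> K" unfolding k_def using h sK by (simp add: subgroup.m_closed subgroup.m_inv_closed)
      have kc: "k \<in> carrier H" unfolding k_def using c by simp
      have "n \<otimes> k = k \<otimes> n"
      proof -
        have "inv k2 \<otimes> (k1 \<otimes> n \<otimes> inv k1) \<otimes> k1 = inv k2 \<otimes> (k2 \<otimes> n \<otimes> inv k2) \<otimes> k1"
          using h(3) by simp
        then show ?thesis unfolding k_def using c nc
          by (simp add: m_assoc cA cB)
      qed
      then have "k = \<one>" using fp[of k n] kK that A_def by auto
      have "k1 = k2 \<otimes> (inv k2 \<otimes> k1)" using c by (simp add: m_assoc[symmetric])
      then show "k1 = k2" using \<open>k = \<one>\<close> c unfolding k_def by simp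
    qed
    then show ?thesis unfolding orb_def by (simp add: card_image)
  qed
  have orb_conj: "orb (k1 \<otimes> n \<otimes> inv k1) = orb n" if "k1 \<in> K" "n \<in> N" for k1 n
  proof -
    have c: "k1 \<in> carrier H" "n \<in> carrier H" using that Kc Nc by auto
    show ?thesis
    proof
      show "orb (k1 \<otimes> n \<otimes> inv k1) \<subseteq> orb n"
      proof
        fix x assume "x \<in> orb (k1 \<otimes> n \<otimes> inv k1)"
        then obtain k where k: "k \<in> K" "x = k \<otimes> (k1 \<otimes> n \<otimes> inv k1) \<otimes> inv k" unfolding orb_def by auto
        have kc: "k \<in> carrier H" using k Kc by auto
        have "x = (k \<otimes> k1) \<otimes> n \<otimes> inv (k \<otimes> k1)" using k(2) c kc by (simp add: m_assoc inv_mult_group cA cB)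
        moreover have "k \<otimes> k1 \<in> K" using k that sK by (simp add: subgroup.m_closed)
        ultimately show "x \<in> orb n" unfolding orb_def by blast
      qed
    next
      show "orb n \<subseteq> orb (k1 \<otimes> n \<otimes> inv k1)"
      proof
        fix x assume "x \<in> orb n"
        then obtain k where k: "k \<in> K" "x = k \<otimes> n \<otimes> inv k" unfolding orb_def by auto
        have kc: "k \<in> carrier H" using k Kc by auto
        have "x = (k \<otimes> inv k1) \<otimes> (k1 \<otimes> n \<otimes> inv k1) \<otimes> inv (k \<otimes> inv k1)"
          using k(2) c kc by (simp add: m_assoc inv_mult_group cA cB)
        moreover have "k \<otimes> inv k1 \<in> K" using k that sK by (simp add: subgroup.m_closed subgroup.m_inv_closed)
        ultimately show "x \<in> orb (k1 \<otimes> n \<otimes> inv k1)" unfolding orb_def by blast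
      qed
    qed
  qed
  have disj: "orb n1 = orb n2" if a1: "n1 \<in> A" and a2: "n2 \<in> A" and a3: "orb n1 \<inter> orb n2 \<noteq> {}" for n1 n2
  proof -
    obtain x where "x \<in> orb n1" "x \<in> orb n2" using a3 by blast
    then obtain k1 k2 where "k1 \<in> K" "x = k1 \<otimes> n1 \<otimes> inv k1" "k2 \<in> K" "x = k2 \<otimes> n2 \<otimes> inv k2"
      unfolding orb_def by auto
    then show ?thesis using orb_conj a1 a2 A_def by (metis Diff_iff)
  qed
  have U: "\<Union> (orb ` A) = A" using orbA self by blast
  have finA: "finite A" using finN A_def by auto
  have "card K * card (orb ` A) = card (\<Union> (orb ` A))"
    apply (rule card_partition)
    using finA U card_orb apply auto[3]
    using disj by (metis (no_types, lifting) imageE)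
  then have "card K * card (orb ` A) = card N - 1" using U A_def one_N finN by simp
  then show "card K dvd card N - 1" by (metis dvd_triv_left)
qed

lemma mult_pq:
  fixes p q :: nat
  assumes "prime p" "prime q" "p \<noteq> q"
  shows "multiplicity p (p ^ i * q ^ j) = i"
proof -
  have "p ^ i \<noteq> 0" "q ^ j \<noteq> 0" using assms by (auto simp: prime_gt_0_nat)
  then have "multiplicity p (p ^ i * q ^ j) = multiplicity p (p ^ i) + multiplicity p (q ^ j)"
    using assms by (simp add: prime_elem_multiplicity_mult_distrib)
  then show ?thesis using assms by (simp add: multiplicity_distinct_prime_power)
qed

lemma hall_mult:
  fixes G (structure)
  assumes grp: "group G" and fin: "finite (carrier G)" and hall: "hall_subgroup G \<pi> H"
    and r: "r \<in> \<pi>" "prime (r::nat)"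
  shows "multiplicity r (card H) = multiplicity r (card (carrier G))"
proof -
  interpret group G by fact
  have sH: "subgroup H G" and nd: "\<not> r dvd (card (carrier G) div card H)"
    using hall r unfolding hall_subgroup_def by auto
  have lag: "card (rcosets H) * card H = card (carrier G)" using lagrange[OF sH] by (simp add: order_def)
  have "finite H" using sH fin subgroup.subset finite_subset by metis
  moreover have "H \<noteq> {}" using sH subgroup.one_closed by blast
  ultimately have cH: "card H > 0" by (simp add: card_gt_0_iff)
  have cG: "card (carrier G) > 0" using fin one_closed by (auto simp: card_gt_0_iff)
  have "card (carrier G) div card H = card (rcosets H)" using lag cH by (metis nonzero_mult_div_cancel_right not_gr0)
  then have nd2: "\<not> r dvd card (rcosets H)" using nd by simp
  have c0: "card (rcosets H) \<noteq> 0" using lag cG by (metis mult_is_0 not_gr0)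
  have "multiplicity r (card (carrier G)) = multiplicity r (card (rcosets H)) + multiplicity r (card H)"
    using lag[symmetric] c0 cH r(2) by (simp add: prime_elem_multiplicity_mult_distrib)
  then show ?thesis using not_dvd_imp_multiplicity_0[OF nd2] by simp
qed

lemma caseA:
  fixes HH (structure) and p q :: nat
  assumes F: "frobenius_group HH N K" and sN: "sylow_subgroup HH q N" and sK: "sylow_subgroup HH p K"
    and fin: "finite (carrier HH)"
  shows "p ^ multiplicity p (card (carrier HH)) dvd q ^ multiplicity q (card (carrier HH)) - 1
         \<and> p ^ multiplicity p (card (carrier HH)) \<ge> 2"
  using frob_card[OF F fin] sN sK unfolding sylow_subgroup_def by simp

lemma caseB:
  fixes HH (structure) and p q :: nat
  assumes T: "two_frobenius HH p q p" and fin: "finite (carrier HH)"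
    and pq: "prime p" "prime q" "p \<noteq> q"
  shows "\<exists>x r. multiplicity p (card (carrier HH)) = x + r
     \<and> q ^ multiplicity q (card (carrier HH)) dvd p ^ x - 1
     \<and> p ^ r dvd q ^ multiplicity q (card (carrier HH)) - 1
     \<and> p ^ r \<ge> 2 \<and> p ^ x \<ge> 2 \<and> q ^ multiplicity q (card (carrier HH)) \<ge> 2"
proof -
  interpret group HH using T unfolding two_frobenius_def by blast
  obtain N M where nN: "N \<lhd> HH" and nM: "M \<lhd> HH" and NM: "N \<subseteq> M"
    and F1: "frobenius_with_kernel (HH\<lparr>carrier := M\<rparr>) N"
    and F2: "frobenius_with_kernel (HH Mod N) (rcosets\<^bsub>HH\<lparr>carrier := M\<rparr>\<^esub> N)"
    and P1: "is_p_power p (card N)"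
    and P2: "is_p_power q (card (rcosets\<^bsub>HH\<lparr>carrier := M\<rparr>\<^esub> N))"
    and P3: "is_p_power p (card (rcosets M))"
    using T unfolding two_frobenius_def by blast
  obtain x where cN: "card N = p ^ x" using P1 unfolding is_p_power_def by blast
  obtain m where cNb: "card (rcosets\<^bsub>HH\<lparr>carrier := M\<rparr>\<^esub> N) = q ^ m" using P2 unfolding is_p_power_def by blast
  obtain r where cMb: "card (rcosets M) = p ^ r" using P3 unfolding is_p_power_def by blast
  obtain K where FK: "frobenius_group (HH\<lparr>carrier := M\<rparr>) N K" using F1 unfolding frobenius_with_kernel_def by blast
  obtain K2 where FK2: "frobenius_group (HH Mod N) (rcosets\<^bsub>HH\<lparr>carrier := M\<rparr>\<^esub> N) K2"
    using F2 unfolding frobenius_with_kernel_def by blast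
  have sM: "subgroup M HH" and sN: "subgroup N HH" using nM nN normal_imp_subgroup by auto
  have finM: "finite (carrier (HH\<lparr>carrier := M\<rparr>))" using sM subgroup.subset fin finite_subset by fastforce
  note fc1 = frob_card[OF FK finM]
  have gM: "group (HH\<lparr>carrier := M\<rparr>)" and sNM: "subgroup N (HH\<lparr>carrier := M\<rparr>)"
    using FK unfolding frobenius_group_def using normal_imp_subgroup by blast+
  have lag1: "card (rcosets\<^bsub>HH\<lparr>carrier := M\<rparr>\<^esub> N) * card N = card M"
    using group.lagrange[OF gM sNM] by (simp add: order_def)
  have lagN: "card (rcosets N) * card N = card (carrier HH)" using lagrange[OF sN] by (simp add: order_def)
  have lagM: "card (rcosets M) * card M = card (carrier HH)" using lagrange[OF sM] by (simp add: order_def)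
  have pp: "p > 0" "q > 0" using pq by (auto simp: prime_gt_0_nat)
  have cK0: "p ^ x * card K = p ^ x * q ^ m" using fc1(1) lag1 cNb cN by (simp add: order_def algebra_simps)
  have cK: "card K = q ^ m" using cK0 pp by simp
  have cG0: "card (carrier HH) > 0" using fin one_closed by (auto simp: card_gt_0_iff)
  have finQ: "finite (carrier (HH Mod N))"
  proof -
    have "card (rcosets N) \<noteq> 0" using lagN cG0 by (metis mult_is_0 not_gr0)
    then show ?thesis unfolding FactGroup_def by (simp add: card_ge_0_finite)
  qed
  note fc2 = frob_card[OF FK2 finQ]
  have e2: "q ^ m * card K2 = card (rcosets N)" using fc2(1) cNb unfolding order_def FactGroup_def by simp
  have eq: "card K2 * (q ^ m * p ^ x) = p ^ r * (q ^ m * p ^ x)"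
  proof -
    have "card K2 * (q ^ m * p ^ x) = (q ^ m * card K2) * p ^ x" by (simp add: ac_simps)
    also have "\<dots> = card (rcosets N) * card N" using e2 cN by simp
    also have "\<dots> = card (carrier HH)" using lagN .
    also have "\<dots> = p ^ r * (q ^ m * p ^ x)" using lagM cMb lag1 cNb cN by (simp add: algebra_simps)
    finally show ?thesis .
  qed
  have cK2: "card K2 = p ^ r" using eq pp by simp
  have cH: "card (carrier HH) = p ^ (x + r) * q ^ m"
    using lagM cMb lag1 cNb cN by (simp add: algebra_simps power_add)
  have m1: "multiplicity p (card (carrier HH)) = x + r" using cH mult_pq[OF pq] by simp
  have m2: "multiplicity q (card (carrier HH)) = m"
    using cH mult_pq[of q p m "x + r"] pq by (simp add: mult.commute)
  show ?thesis
    apply (rule exI[of _ x], rule exI[of _ r])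
    using m1 m2 fc1 fc2 cK cK2 cN cNb by simp
qed

lemma ar1:
  fixes P Q :: nat
  assumes "P dvd Q - 1" "Q dvd P - 1" "P \<ge> 2" "Q \<ge> 2"
  shows False
proof -
  have "P \<le> Q - 1" using assms(1,4) by (simp add: dvd_imp_le)
  moreover have "Q \<le> P - 1" using assms(2,3) by (simp add: dvd_imp_le)
  ultimately show False using assms by linarith
qed

lemma ar2:
  fixes P Q1 Q2 :: nat
  assumes "P dvd Q1 * Q2 - 1" "P dvd Q1 - 1" "Q2 dvd P - 1" "Q2 \<ge> 2" "Q1 \<ge> 1" "P \<ge> 2"
  shows False
proof -
  obtain c where c: "Q1 = c + 1" using assms(5) by (metis add.commute le_Suc_ex Suc_eq_plus1_left)
  obtain d where d: "Q2 = d + 1" using assms(4) by (metis add.commute le_Suc_ex Suc_eq_plus1_left le_trans one_le_numeral)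
  have e: "Q1 * Q2 - 1 = Q2 * (Q1 - 1) + (Q2 - 1)" using c d by (simp add: algebra_simps)
  have "P dvd Q2 * (Q1 - 1)" using assms(2) by simp
  then have "P dvd Q2 - 1" using assms(1) e by (simp add: dvd_add_right_iff)
  then show False using ar1 assms by blast
qed

lemma ar3:
  fixes P Q Px Qx :: nat
  assumes "Q dvd Px - 1" "P dvd Qx - 1" "Px \<ge> 2" "Qx \<ge> 2" "Px \<le> P" "Qx \<le> Q"
  shows False
proof -
  have "Q \<le> Px - 1" using assms(1,3) by (simp add: dvd_imp_le)
  moreover have "P \<le> Qx - 1" using assms(2,4) by (simp add: dvd_imp_le)
  ultimately show False using assms by linarith
qed


theorem mainTheorem5:
  fixes G :: "('a, 'b) monoid_scheme" and p q :: nat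
  assumes "group G" and "finite (carrier G)"
    and "prime p" and "prime q" and "p \<noteq> q"
    and "p dvd order G" and "q dvd order G"
    and "\<not> codegree_adjacent G p q"
  shows "\<not> (\<exists>H1 H2.
            hall_subgroup G {p, q} H1 \<and>
            (frob_kernel_sylow G H1 p q \<or> two_frobenius (G\<lparr>carrier := H1\<rparr>) p q p) \<and>
            hall_subgroup G {p, q} H2 \<and>
            (frob_kernel_sylow G H2 q p \<or> two_frobenius (G\<lparr>carrier := H2\<rparr>) q p q))"
  proof
  assume "\<exists>H1 H2.
            hall_subgroup G {p, q} H1 \<and>
            (frob_kernel_sylow G H1 p q \<or> two_frobenius (G\<lparr>carrier := H1\<rparr>) p q p) \<and>
            hall_subgroup G {p, q} H2 \<and>
            (frob_kernel_sylow G H2 q p \<or> two_frobenius (G\<lparr>carrier := H2\<rparr>) q p q)"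
  then obtain H1 H2 where hH1: "hall_subgroup G {p, q} H1"
    and c1: "frob_kernel_sylow G H1 p q \<or> two_frobenius (G\<lparr>carrier := H1\<rparr>) p q p"
    and hH2: "hall_subgroup G {p, q} H2"
    and c2: "frob_kernel_sylow G H2 q p \<or> two_frobenius (G\<lparr>carrier := H2\<rparr>) q p q"
    by blast
  have pq: "prime p" "prime q" "p \<noteq> q" by fact+
  have qp: "prime q" "prime p" "q \<noteq> p" using pq by auto
  define a where "a = multiplicity p (card (carrier G))"
  define b where "b = multiplicity q (card (carrier G))"
  have sH1: "subgroup H1 G" using hH1 unfolding hall_subgroup_def by blast
  have sH2: "subgroup H2 G" using hH2 unfolding hall_subgroup_def by blast
  have fin1: "finite (carrier (G\<lparr>carrier := H1\<rparr>))"
    using sH1 subgroup.subset assms(2) finite_subset by fastforce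
  have fin2: "finite (carrier (G\<lparr>carrier := H2\<rparr>))"
    using sH2 subgroup.subset assms(2) finite_subset by fastforce
  have a1: "multiplicity p (card H1) = a" using hall_mult[OF assms(1,2) hH1] pq unfolding a_def by simp
  have b1: "multiplicity q (card H1) = b" using hall_mult[OF assms(1,2) hH1] pq unfolding b_def by simp
  have a2: "multiplicity p (card H2) = a" using hall_mult[OF assms(1,2) hH2] pq unfolding a_def by simp
  have b2: "multiplicity q (card H2) = b" using hall_mult[OF assms(1,2) hH2] pq unfolding b_def by simp
  have R1: "(p ^ a dvd q ^ b - 1 \<and> p ^ a \<ge> 2) \<or> (\<exists>x r. a = x + r \<and> q ^ b dvd p ^ x - 1 \<and>
      p ^ r dvd q ^ b - 1 \<and> p ^ r \<ge> 2 \<and> p ^ x \<ge> 2 \<and> q ^ b \<ge> 2)"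
    using c1
  proof
    assume "frob_kernel_sylow G H1 p q"
    then obtain N K where "frobenius_group (G\<lparr>carrier := H1\<rparr>) N K"
      "sylow_subgroup (G\<lparr>carrier := H1\<rparr>) q N" "sylow_subgroup (G\<lparr>carrier := H1\<rparr>) p K"
      unfolding frob_kernel_sylow_def by blast
    from caseA[OF this fin1] show ?thesis using a1 b1 by simp
  next
    assume "two_frobenius (G\<lparr>carrier := H1\<rparr>) p q p"
    from caseB[OF this fin1 pq] show ?thesis using a1 b1 by simp
  qed
  have R2: "(q ^ b dvd p ^ a - 1 \<and> q ^ b \<ge> 2) \<or> (\<exists>x r. b = x + r \<and> p ^ a dvd q ^ x - 1 \<and>
      q ^ r dvd p ^ a - 1 \<and> q ^ r \<ge> 2 \<and> q ^ x \<ge> 2 \<and> p ^ a \<ge> 2)"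
    using c2
  proof
    assume "frob_kernel_sylow G H2 q p"
    then obtain N K where "frobenius_group (G\<lparr>carrier := H2\<rparr>) N K"
      "sylow_subgroup (G\<lparr>carrier := H2\<rparr>) p N" "sylow_subgroup (G\<lparr>carrier := H2\<rparr>) q K"
      unfolding frob_kernel_sylow_def by blast
    from caseA[OF this fin2] show ?thesis using a2 b2 by simp
  next
    assume "two_frobenius (G\<lparr>carrier := H2\<rparr>) q p q"
    from caseB[OF this fin2 qp] show ?thesis using a2 b2 by simp
  qed
  have p1: "p \<ge> 1" "q \<ge> 1" using pq prime_gt_0_nat by (auto simp: Suc_le_eq)
  show False
    using R1
  proof
    assume A: "p ^ a dvd q ^ b - 1 \<and> p ^ a \<ge> 2"
    show False using R2
    proof
      assume "q ^ b dvd p ^ a - 1 \<and> q ^ b \<ge> 2"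
      then show False using A ar1 by blast
    next
      assume "\<exists>x r. b = x + r \<and> p ^ a dvd q ^ x - 1 \<and>
        q ^ r dvd p ^ a - 1 \<and> q ^ r \<ge> 2 \<and> q ^ x \<ge> 2 \<and> p ^ a \<ge> 2"
      then obtain x r where D: "b = x + r" "p ^ a dvd q ^ x - 1" "q ^ r dvd p ^ a - 1"
        "q ^ r \<ge> 2" "q ^ x \<ge> 2" by blast
      have "p ^ a dvd q ^ x * q ^ r - 1" using A D(1) by (simp add: power_add)
      then show False using ar2[of "p ^ a" "q ^ x" "q ^ r"] D A by linarith
    qed
  next
    assume "\<exists>x r. a = x + r \<and> q ^ b dvd p ^ x - 1 \<and>
      p ^ r dvd q ^ b - 1 \<and> p ^ r \<ge> 2 \<and> p ^ x \<ge> 2 \<and> q ^ b \<ge> 2"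
    then obtain x r where B: "a = x + r" "q ^ b dvd p ^ x - 1" "p ^ r dvd q ^ b - 1"
      "p ^ r \<ge> 2" "p ^ x \<ge> 2" "q ^ b \<ge> 2" by blast
    show False using R2
    proof
      assume C: "q ^ b dvd p ^ a - 1 \<and> q ^ b \<ge> 2"
      have "q ^ b dvd p ^ x * p ^ r - 1" using C B(1) by (simp add: power_add)
      then show False using ar2[of "q ^ b" "p ^ x" "p ^ r"] B C by linarith
    next
      assume "\<exists>x r. b = x + r \<and> p ^ a dvd q ^ x - 1 \<and>
        q ^ r dvd p ^ a - 1 \<and> q ^ r \<ge> 2 \<and> q ^ x \<ge> 2 \<and> p ^ a \<ge> 2"
      then obtain x' r' where D: "b = x' + r'" "p ^ a dvd q ^ x' - 1"
        "q ^ x' \<ge> 2" "p ^ a \<ge> 2" by blast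
      have le1: "p ^ x \<le> p ^ a" using B(1) p1 by (simp add: power_increasing)
      have le2: "q ^ x' \<le> q ^ b" using D(1) p1 by (simp add: power_increasing)
      show False using ar3[OF B(2) D(2) B(5) D(3) le1 le2] .
    qed
  qed
qed

end
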